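(* Let $p=(p_k)_{k\ge0}$ and $q=(q_k)_{k\ge0}$ be unimodal probability distributions on $\mathbb{N}_0$, and let $X\sim p$, $Y\sim q$. Then $X\le_{wd}Y$ if and only if $X\le_{rand}Y$, i.e. if and only if $\sum_{i=0}^{m}p_{[i]}\ge\sum_{i=0}^{m}q_{[i]}$ for all $m\in\mathbb{N}_0$.
   Context: For a real random variable $X$, its Lévy concentration function is $Q_X(\varepsilon)=\sup_{x_0\in\mathbb{R}}\Pr\{X\in[x_0,x_0+\varepsilon]\}$, $\varepsilon>0$. For random variables $X,Y$, write $X\le_{wd}Y$ if $Q_X(\varepsilon)\ge Q_Y(\varepsilon)$ for all $\varepsilon>0$. A distribution $p$ on the integers is unimodal if there exists an integer $M$ with $p_k\ge p_{k-1}$ for all $k\le M$ and $p_{k+1}\le p_k$ for all $k\ge M$. For a probability vector $p$, $p_{[0]}\ge p_{[1]}\ge\cdots$ denote its entries in decreasing order. $X\le_{rand}Y$ ($X$ less random than $Y$) means $q$ is majorized by $p$: $\sum_{i=0}^{m}p_{[i]}\ge\sum_{i=0}^{m}q_{[i]}$ for all $m$ (both sum to $1$). *)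

theory Defs
  imports Complex_Main
begin

definition is_distr :: "(nat \<Rightarrow> real) \<Rightarrow> bool" where
  "is_distr p \<longleftrightarrow> (\<forall>k. 0 \<le> p k) \<and> p sums 1"

text \<open>Unimodality (the distribution is extended by zero to negative integers; a mode
  must then lie in the nonnegative integers).\<close>
definition unimodal :: "(nat \<Rightarrow> real) \<Rightarrow> bool" where
  "unimodal p \<longleftrightarrow> (\<exists>M::nat. (\<forall>k. 1 \<le> k \<and> k \<le> M \<longrightarrow> p (k - 1) \<le> p k)
                              \<and> (\<forall>k\<ge>M. p (Suc k) \<le> p k))"

definition conc :: "(nat \<Rightarrow> real) \<Rightarrow> real \<Rightarrow> real" where
  "conc p \<epsilon> = (SUP x0::real. (\<Sum>k\<in>{k. x0 \<le> real k \<and> real k \<le> x0 + \<epsilon>}. p k))"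

definition wd_le :: "(nat \<Rightarrow> real) \<Rightarrow> (nat \<Rightarrow> real) \<Rightarrow> bool" where
  "wd_le p q \<longleftrightarrow> (\<forall>\<epsilon>>0. conc p \<epsilon> \<ge> conc q \<epsilon>)"

text \<open>The i-th largest entry p_[i] (counted with multiplicity; 0 once the support is exhausted).\<close>
definition dec :: "(nat \<Rightarrow> real) \<Rightarrow> nat \<Rightarrow> real" where
  "dec p i = Sup ({0} \<union> {t. t > 0 \<and> i < card {k. t \<le> p k}})"

definition rand_le :: "(nat \<Rightarrow> real) \<Rightarrow> (nat \<Rightarrow> real) \<Rightarrow> bool" where
  "rand_le p q \<longleftrightarrow> (\<forall>m. (\<Sum>i\<le>m. dec p i) \<ge> (\<Sum>i\<le>m. dec q i))"

end

theory Submission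
  imports Defs
begin

lemma distr_le1: assumes "is_distr p" shows "p k \<le> 1"
proof -
  have s: "summable p" and e: "suminf p = 1" using assms unfolding is_distr_def
    by (auto simp: sums_iff)
  have "sum p {k} \<le> suminf p"
    by (rule sum_le_suminf[OF s]) (use assms in \<open>auto simp: is_distr_def\<close>)
  thus ?thesis using e by simp
qed

lemma distr_fin: assumes "is_distr p" "t > 0" shows "finite {k. t \<le> p k}"
proof -
  have "p \<longlonglongrightarrow> 0" using assms unfolding is_distr_def
    using summable_LIMSEQ_zero sums_summable by blast
  then have "eventually (\<lambda>k. p k < t) sequentially"
    using assms(2) by (rule order_tendstoD(2))
  then obtain N where N: "\<forall>k\<ge>N. p k < t" by (auto simp: eventually_sequentially)
  have "{k. t \<le> p k} \<subseteq> {..<N}" using N by (auto simp: not_less[symmetric])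
  thus ?thesis using finite_subset by blast
qed

lemma dec_bdd: assumes "is_distr p"
  shows "bdd_above ({0} \<union> {t. t > 0 \<and> i < card {k. t \<le> p k}})"
proof (rule bdd_aboveI[where M=1])
  fix x assume x: "x \<in> {0} \<union> {t. t > 0 \<and> i < card {k. t \<le> p k}}"
  show "x \<le> 1"
  proof (cases "x = 0")
    case False
    then have "card {k. x \<le> p k} > 0" using x by auto
    then obtain k where "x \<le> p k" using card_gt_0_iff by fastforce
    then show ?thesis using distr_le1[OF assms, of k] by simp
  qed simp
qed

lemma dec_nonneg: assumes "is_distr p" shows "0 \<le> dec p i"
  unfolding dec_def by (rule cSup_upper[OF _ dec_bdd[OF assms]]) simp

lemma dec_G1: assumes "is_distr p" "t > 0" "i < card {k. t \<le> p k}"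
  shows "t \<le> dec p i"
  unfolding dec_def by (rule cSup_upper[OF _ dec_bdd[OF assms(1)]]) (use assms in auto)

lemma sum_le_dec:
  assumes "is_distr p"
  shows "finite A \<Longrightarrow> card A = c \<Longrightarrow> sum p A \<le> (\<Sum>i<c. dec p i)"
proof (induction c arbitrary: A)
  case 0
  then show ?case by simp
next
  case (Suc c)
  then have ne: "A \<noteq> {}" by auto
  define v where "v = Min (p ` A)"
  have "v \<in> p ` A" unfolding v_def using Suc.prems ne by (intro Min_in) auto
  then obtain m where m: "m \<in> A" "p m = v" by auto
  have mmin: "\<forall>x\<in>A. p m \<le> p x" using m Suc.prems unfolding v_def by auto
  have "sum p A = p m + sum p (A - {m})" using Suc.prems m by (simp add: sum.remove)
  also have "sum p (A - {m}) \<le> (\<Sum>i<c. dec p i)"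
    using Suc.IH[of "A - {m}"] Suc.prems m by auto
  also have "p m \<le> dec p c"
  proof (cases "p m > 0")
    case True
    have "A \<subseteq> {k. p m \<le> p k}" using mmin by auto
    then have "card A \<le> card {k. p m \<le> p k}"
      using distr_fin[OF assms True] by (rule card_mono[rotated])
    then show ?thesis using Suc.prems by (intro dec_G1[OF assms True]) auto
  next
    case False
    then show ?thesis using dec_nonneg[OF assms, of c] by simp
  qed
  finally show ?case by simp
qed

lemma sum_le_dec': assumes "is_distr p" "finite A" "card A \<le> n"
  shows "sum p A \<le> (\<Sum>i<n. dec p i)"
proof -
  have "sum p A \<le> (\<Sum>i<card A. dec p i)" using sum_le_dec[OF assms(1,2)] by simp
  also have "\<dots> \<le> (\<Sum>i<n. dec p i)"
    by (rule sum_mono2) (use assms dec_nonneg in auto)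
  finally show ?thesis .
qed

lemma dec_eq:
  assumes "is_distr p" "finite W" "card W = n" "j0 \<notin> W"
    "\<forall>k\<in>W. p j0 \<le> p k" "\<forall>j. j \<notin> W \<longrightarrow> p j \<le> p j0"
  shows "dec p n = p j0"
proof (rule antisym)
  have nn: "0 \<le> p j0" using assms(1) by (auto simp: is_distr_def)
  show "p j0 \<le> dec p n"
  proof (cases "p j0 > 0")
    case True
    have "insert j0 W \<subseteq> {k. p j0 \<le> p k}" using assms(5) by auto
    then have "card (insert j0 W) \<le> card {k. p j0 \<le> p k}"
      using distr_fin[OF assms(1) True] by (rule card_mono[rotated])
    then show ?thesis using assms(2,3,4) by (intro dec_G1[OF assms(1) True]) auto
  next
    case False
    then show ?thesis using dec_nonneg[OF assms(1), of n] nn by simp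
  qed
  show "dec p n \<le> p j0"
  proof (rule ccontr)
    assume "\<not> dec p n \<le> p j0"
    then have "p j0 < Sup ({0} \<union> {t. t > 0 \<and> n < card {k. t \<le> p k}})"
      unfolding dec_def by simp
    then obtain t where t: "t \<in> {0} \<union> {t. t > 0 \<and> n < card {k. t \<le> p k}}" "p j0 < t"
      using less_cSup_iff[OF _ dec_bdd[OF assms(1)]] by blast
    then have tp: "t > 0" "n < card {k. t \<le> p k}" using nn by auto
    have "{k. t \<le> p k} \<subseteq> W" using assms(6) t(2) by (auto simp: not_less[symmetric])
    then have "card {k. t \<le> p k} \<le> card W" using assms(2) by (rule card_mono[rotated])
    then show False using tp assms(3) by simp
  qed
qed


lemma uni_up: fixes p :: "nat \<Rightarrow> real" assumes "\<forall>k. 1 \<le> k \<and> k \<le> M \<longrightarrow> p (k - 1) \<le> p k"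
  shows "j \<le> k \<Longrightarrow> k \<le> M \<Longrightarrow> (p j :: real) \<le> p k"
proof (induction k)
  case 0 then show ?case by simp
next
  case (Suc k)
  show ?case
  proof (cases "j = Suc k")
    case False
    then have "p j \<le> p k" using Suc by simp
    also have "p k \<le> p (Suc k)" using assms[rule_format, of "Suc k"] Suc.prems by simp
    finally show ?thesis .
  qed simp
qed

lemma uni_down: fixes p :: "nat \<Rightarrow> real" assumes "\<forall>k\<ge>M. p (Suc k) \<le> p k"
  shows "M \<le> j \<Longrightarrow> j \<le> k \<Longrightarrow> (p k :: real) \<le> p j"
proof (induction k)
  case 0 then show ?case by simp
next
  case (Suc k)
  show ?case
  proof (cases "j = Suc k")
    case False
    then have "p k \<le> p j" using Suc by simp
    moreover have "p (Suc k) \<le> p k" using assms Suc.prems False by simp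
    ultimately show ?thesis by simp
  qed simp
qed

definition inv_w :: "(nat \<Rightarrow> real) \<Rightarrow> nat set \<Rightarrow> bool" where
  "inv_w p W \<longleftrightarrow> (\<forall>k\<in>W. \<forall>j. j \<notin> W \<longrightarrow> p j \<le> p k)"

lemma step_w:
  assumes "is_distr p" "finite W" "card W = n" "inv_w p W" "j0 \<notin> W"
    "\<forall>j. j \<notin> W \<longrightarrow> p j \<le> p j0" "sum p W = (\<Sum>i<n. dec p i)"
  shows "inv_w p (insert j0 W) \<and> sum p (insert j0 W) = (\<Sum>i<Suc n. dec p i)"
proof
  show "inv_w p (insert j0 W)" using assms(4,6) unfolding inv_w_def by auto
  have "\<forall>k\<in>W. p j0 \<le> p k" using assms(4,5) unfolding inv_w_def by auto
  then have "dec p n = p j0" using dec_eq[OF assms(1,2,3,5)] assms(6) by blast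
  then show "sum p (insert j0 W) = (\<Sum>i<Suc n. dec p i)"
    using assms(2,5,7) by simp
qed

lemma window_exists:
  assumes "is_distr p" "unimodal p"
  shows "\<exists>a. sum p {a..<a+n} = (\<Sum>i<n. dec p i)"
proof -
  obtain M where up: "\<forall>k. 1 \<le> k \<and> k \<le> M \<longrightarrow> p (k - 1) \<le> p k"
    and dn: "\<forall>k\<ge>M. p (Suc k) \<le> p k" using assms(2) unfolding unimodal_def by blast
  have "\<exists>a. a \<le> M \<and> M \<le> a + n \<and> inv_w p {a..<a+n} \<and> sum p {a..<a+n} = (\<Sum>i<n. dec p i)"
  proof (induction n)
    case 0
    show ?case by (rule exI[of _ M]) (auto simp: inv_w_def)
  next
    case (Suc n)
    then obtain a where a: "a \<le> M" "M \<le> a + n" "inv_w p {a..<a+n}"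
      "sum p {a..<a+n} = (\<Sum>i<n. dec p i)" by blast
    show ?case
    proof (cases "0 < a \<and> p (a+n) \<le> p (a-1)")
      case True
      have out: "\<forall>j. j \<notin> {a..<a+n} \<longrightarrow> p j \<le> p (a-1)"
      proof (intro allI impI)
        fix j assume "j \<notin> {a..<a+n}"
        then consider "j < a" | "a + n \<le> j" by auto
        then show "p j \<le> p (a-1)"
        proof cases
          case 1 then show ?thesis using uni_up[OF up, of j "a-1"] a by simp
        next
          case 2 then show ?thesis using uni_down[OF dn, of "a+n" j] a True by simp
        qed
      qed
      have eq: "{a-1..<a-1+Suc n} = insert (a-1) {a..<a+n}" using True by auto
      have "inv_w p (insert (a-1) {a..<a+n}) \<and> sum p (insert (a-1) {a..<a+n}) = (\<Sum>i<Suc n. dec p i)"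
        by (rule step_w[OF assms(1) _ _ a(3) _ out a(4)]) (use True in auto)
      then show ?thesis using eq a True by (intro exI[of _ "a-1"]) auto
    next
      case False
      have out: "\<forall>j. j \<notin> {a..<a+n} \<longrightarrow> p j \<le> p (a+n)"
      proof (intro allI impI)
        fix j assume "j \<notin> {a..<a+n}"
        then consider "j < a" | "a + n \<le> j" by auto
        then show "p j \<le> p (a+n)"
        proof cases
          case 1
          then have "p j \<le> p (a-1)" using uni_up[OF up, of j "a-1"] a by simp
          moreover have "p (a-1) < p (a+n)" using 1 False by auto
          ultimately show ?thesis by simp
        next
          case 2 then show ?thesis using uni_down[OF dn, of "a+n" j] a by simp
        qed
      qed
      have eq: "{a..<a+Suc n} = insert (a+n) {a..<a+n}" by auto
      have "inv_w p (insert (a+n) {a..<a+n}) \<and> sum p (insert (a+n) {a..<a+n}) = (\<Sum>i<Suc n. dec p i)"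
        by (rule step_w[OF assms(1) _ _ a(3) _ out a(4)]) auto
      then show ?thesis using eq a by (intro exI[of _ a]) auto
    qed
  qed
  then show ?thesis by blast
qed

lemma window_set:
  assumes "\<epsilon> > 0"
  shows "{k::nat. x0 \<le> real k \<and> real k \<le> x0 + \<epsilon>} \<subseteq> {nat \<lceil>x0\<rceil> ..< nat \<lceil>x0\<rceil> + (nat \<lfloor>\<epsilon>\<rfloor> + 1)}"
proof
  fix k assume k: "k \<in> {k::nat. x0 \<le> real k \<and> real k \<le> x0 + \<epsilon>}"
  have "\<lceil>x0\<rceil> \<le> int k" using k by (simp add: ceiling_le_iff)
  moreover have "real k - \<lceil>x0\<rceil> \<le> \<epsilon>" using k le_of_int_ceiling[of x0] by simp linarith
  then have "int k - \<lceil>x0\<rceil> \<le> \<lfloor>\<epsilon>\<rfloor>" by (simp add: le_floor_iff)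
  moreover have "\<lfloor>\<epsilon>\<rfloor> \<ge> 0" using assms by simp
  ultimately show "k \<in> {nat \<lceil>x0\<rceil> ..< nat \<lceil>x0\<rceil> + (nat \<lfloor>\<epsilon>\<rfloor> + 1)}" using k by auto
qed

lemma window_set_eq:
  assumes "\<epsilon> > 0"
  shows "{k::nat. real a \<le> real k \<and> real k \<le> real a + \<epsilon>} = {a ..< a + (nat \<lfloor>\<epsilon>\<rfloor> + 1)}"
proof -
  have "\<lfloor>\<epsilon>\<rfloor> \<ge> 0" using assms by simp
  then obtain f :: nat where f: "\<lfloor>\<epsilon>\<rfloor> = int f" using zero_le_imp_eq_int by blast
  show ?thesis
  proof (rule set_eqI)
    fix k :: nat
    have 1: "real k \<le> real a + \<epsilon> \<longleftrightarrow> int k - int a \<le> \<lfloor>\<epsilon>\<rfloor>"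
      by (simp add: le_floor_iff algebra_simps)
    have 2: "real a \<le> real k \<longleftrightarrow> a \<le> k" by simp
    have 3: "(a \<le> k \<and> int k - int a \<le> int f) \<longleftrightarrow> (a \<le> k \<and> k < a + (f + 1))" by linarith
    show "k \<in> {k::nat. real a \<le> real k \<and> real k \<le> real a + \<epsilon>} \<longleftrightarrow> k \<in> {a ..< a + (nat \<lfloor>\<epsilon>\<rfloor> + 1)}"
      using 1 2 3 f by simp
  qed
qed

lemma conc_eq:
  assumes "is_distr p" "unimodal p" "\<epsilon> > 0"
  shows "conc p \<epsilon> = (\<Sum>i<nat \<lfloor>\<epsilon>\<rfloor> + 1. dec p i)"
proof -
  define n where "n = nat \<lfloor>\<epsilon>\<rfloor> + 1"
  define T where "T = (\<Sum>i<n. dec p i)"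
  define f where "f x0 = (\<Sum>k\<in>{k. x0 \<le> real k \<and> real k \<le> x0 + \<epsilon>}. p k)" for x0
  have le: "f x0 \<le> T" for x0
  proof -
    let ?A = "{k::nat. x0 \<le> real k \<and> real k \<le> x0 + \<epsilon>}"
    have sub: "?A \<subseteq> {nat \<lceil>x0\<rceil> ..< nat \<lceil>x0\<rceil> + n}" using window_set[OF assms(3)] n_def by simp
    then have fin: "finite ?A" using finite_subset by blast
    have "card ?A \<le> n" using card_mono[OF _ sub] by simp
    then show ?thesis unfolding f_def T_def by (rule sum_le_dec'[OF assms(1) fin])
  qed
  obtain a where a: "sum p {a..<a+n} = T" using window_exists[OF assms(1,2)] T_def by blast
  have fa: "f (real a) = T" unfolding f_def using window_set_eq[OF assms(3), of a] a n_def by simp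
  have "conc p \<epsilon> = (SUP x0. f x0)" unfolding conc_def f_def by simp
  also have "\<dots> = T"
  proof (rule antisym)
    show "(SUP x0. f x0) \<le> T" by (rule cSUP_least) (use le in auto)
    have bdd: "bdd_above (range f)" by (rule bdd_aboveI2[where M=T]) (rule le)
    have "f (real a) \<le> (SUP x0. f x0)" by (rule cSUP_upper[OF _ bdd]) simp
    then show "T \<le> (SUP x0. f x0)" using fa by simp
  qed
  finally show ?thesis unfolding T_def n_def .
qed

theorem proposition5p1:
  fixes p q :: "nat \<Rightarrow> real"
  assumes "is_distr p" "is_distr q" "unimodal p" "unimodal q"
  shows "wd_le p q \<longleftrightarrow> rand_le p q"
proof
  assume h: "wd_le p q"
  show "rand_le p q" unfolding rand_le_def
  proof
    fix m
    have e: "real m + 1/2 > 0" by simp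
    have fl: "nat \<lfloor>real m + 1/2\<rfloor> = m" by linarith
    have "conc q (real m + 1/2) \<le> conc p (real m + 1/2)" using h e unfolding wd_le_def by blast
    then have "(\<Sum>i<m+1. dec q i) \<le> (\<Sum>i<m+1. dec p i)"
      using conc_eq[OF assms(1,3) e] conc_eq[OF assms(2,4) e] fl by simp
    then show "(\<Sum>i\<le>m. dec q i) \<le> (\<Sum>i\<le>m. dec p i)" using lessThan_Suc_atMost by simp
  qed
next
  assume h: "rand_le p q"
  show "wd_le p q" unfolding wd_le_def
  proof (intro allI impI)
    fix \<epsilon> :: real assume e: "\<epsilon> > 0"
    have "(\<Sum>i\<le>nat \<lfloor>\<epsilon>\<rfloor>. dec q i) \<le> (\<Sum>i\<le>nat \<lfloor>\<epsilon>\<rfloor>. dec p i)" using h unfolding rand_le_def by blast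
    then show "conc q \<epsilon> \<le> conc p \<epsilon>"
      using conc_eq[OF assms(1,3) e] conc_eq[OF assms(2,4) e] lessThan_Suc_atMost by simp
  qed
qed

end
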